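(* Let $z_1 = 0$, $z_2=1/3$, $z_3 = -1/3$. For every $\varepsilon > 0$ there exist $T>0$ and $h \in \mathcal{H}$ such that \[ \begin{aligned} z_1-\varepsilon \leq \gamma^{z_3}_h(T)&< \gamma^{z_2}_h(T) \leq z_1+\varepsilon, \\ z_2-\varepsilon \leq \gamma^{z_1}_h(3T)&< \gamma^{z_3}_h(3T)+1 \leq z_2+\varepsilon, \\ z_3-\varepsilon \leq \gamma^{z_2}_h(5T)-1&< \gamma^{z_1}_h(5T) \leq z_3+\varepsilon. \end{aligned} \]
   Context: $\mathcal H$ is the space of piecewise constant compactly supported functions $h=(h_1,h_{-1}):\mathbb{R}^+\to\mathbb{R}^2$. For fixed $\sigma>0$ and $x\in\mathbb{R}$, $\gamma^x_h$ is the real-valued solution of $\frac{\mathrm{d}\gamma^x_h}{\mathrm{d}t}=c+\sigma^2\big(\mathfrak a(\gamma^x_h)-\tfrac12\sum_{k\in\mathbb{Z}}\mathfrak b_k'(\gamma^x_h)\mathfrak b_k(\gamma^x_h)\big)+\sigma\big(\mathfrak b_1(\gamma^x_h)h_1+\mathfrak b_{-1}(\gamma^x_h)h_{-1}\big)$, $\gamma^x_h(0)=x$. Here, for a traveling pulse $u^*$ (speed $c$) of $\mathrm{d}u=Au\,\mathrm{d}t+f(u)\,\mathrm{d}t$ on $\mathcal X=H^{s,p}(\mathbb{R};\mathbb{R}^n)$, with $\mathcal T_xf=f(\cdot-x)$, isochron map $\pi_{\mathrm{iso}}$ (upright $\pi$ in the paper, not the circle constant; defined by $\lim_{t\to\infty}\|u^v(t)-u^*(\cdot-ct-\pi_{\mathrm{iso}}(v))\|_{\mathcal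 X}=0$), basis $e_k(x)=\sqrt2\cos(2\pi kx)$ ($k>0$), $e_0=1$, $e_k(x)=\sqrt2\sin(2\pi kx)$ ($k<0$), coefficients $\alpha_k$, nonlinearity $g$: $\mathfrak a(x)=\tfrac12\sum_k\alpha_k^2\big(\pi_{\mathrm{iso}}'(\mathcal T_xu^* )[g'(\mathcal T_xu^* )g(\mathcal T_xu^* )e_k^2]+\pi_{\mathrm{iso}}''(\mathcal T_xu^* )[g(\mathcal T_xu^* )e_k,g(\mathcal T_xu^* )e_k]\big)$, $\mathfrak b_k(x)=\alpha_k\pi_{\mathrm{iso}}'(\mathcal T_xu^* )[g(\mathcal T_xu^* )e_k]$; these are smooth, 1-periodic, and $\mathrm{span}\{\mathfrak b_1,\mathfrak b_{-1}\}=\{L\sin(2\pi\cdot+\eta):L,\eta\in\mathbb{R}\}$. (The same statement holds for the drift-free control ODE $\frac{\mathrm{d}\tilde\gamma^x_h}{\mathrm{d}t}=\sigma(\mathfrak b_1(\tilde\gamma^x_h)h_1+\mathfrak b_{-1}(\tilde\gamma^x_h)h_{-1})$, and the present lemma transfers it perturbatively.) *)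

theory Defs
  imports "HOL-Analysis.Analysis"
begin

definition smooth_fun :: "(real \<Rightarrow> real) \<Rightarrow> bool" where
  "smooth_fun f \<longleftrightarrow> (\<forall>n x. ((deriv ^^ n) f) differentiable (at x))"

definition one_periodic :: "(real \<Rightarrow> real) \<Rightarrow> bool" where
  "one_periodic f \<longleftrightarrow> (\<forall>x. f (x + 1) = f x)"

text \<open>The control space H: piecewise constant, compactly supported functions
  h = (h_1, h_{-1}) on the half line [0, infinity). Only values at times t >= 0 matter.\<close>
definition in_H :: "(real \<Rightarrow> real \<times> real) \<Rightarrow> bool" where
  "in_H h \<longleftrightarrow> (\<exists>(n::nat) (t::nat \<Rightarrow> real) (v::nat \<Rightarrow> real \<times> real).
      t 0 = 0 \<and> (\<forall>i<n. t i < t (Suc i)) \<and>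
      (\<forall>i<n. \<forall>s. t i \<le> s \<and> s < t (Suc i) \<longrightarrow> h s = v i) \<and>
      (\<forall>s. t n \<le> s \<longrightarrow> h s = (0, 0)))"

definition drift_term :: "(real \<Rightarrow> real) \<Rightarrow> (int \<Rightarrow> real \<Rightarrow> real) \<Rightarrow> real \<Rightarrow> real" where
  "drift_term a b x = a x - (1/2) * infsum (\<lambda>k. deriv (b k) x * b k x) UNIV"

definition ctrl_rhs :: "real \<Rightarrow> real \<Rightarrow> (real \<Rightarrow> real) \<Rightarrow> (int \<Rightarrow> real \<Rightarrow> real)
    \<Rightarrow> (real \<Rightarrow> real \<times> real) \<Rightarrow> real \<Rightarrow> real \<Rightarrow> real" where
  "ctrl_rhs c \<sigma> a b h t y =
     c + \<sigma>\<^sup>2 * drift_term a b y + \<sigma> * (b 1 y * fst (h t) + b (-1) y * snd (h t))"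

text \<open>g is a (Caratheodory, i.e. integral-form) solution on [0, infinity) of the
  control ODE with initial value x; since h is piecewise constant, this is the
  usual notion of solution.\<close>
definition is_ctrl_sol :: "real \<Rightarrow> real \<Rightarrow> (real \<Rightarrow> real) \<Rightarrow> (int \<Rightarrow> real \<Rightarrow> real)
    \<Rightarrow> (real \<Rightarrow> real \<times> real) \<Rightarrow> real \<Rightarrow> (real \<Rightarrow> real) \<Rightarrow> bool" where
  "is_ctrl_sol c \<sigma> a b h x g \<longleftrightarrow>
     continuous_on {0..} g \<and>
     (\<forall>t\<ge>0. (\<lambda>s. ctrl_rhs c \<sigma> a b h s (g s)) integrable_on {0..t} \<and>
             g t = x + integral {0..t} (\<lambda>s. ctrl_rhs c \<sigma> a b h s (g s)))"

end

theory Submission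
  imports Defs
begin


lemma nonpos_stays:
  fixes \<phi> \<phi>' :: "real \<Rightarrow> real"
  assumes ab: "a \<le> b" and cont: "continuous_on {a..b} \<phi>"
    and der: "\<And>t. a < t \<Longrightarrow> t < b \<Longrightarrow> (\<phi> has_real_derivative \<phi>' t) (at t)"
    and sgn: "\<And>t. a < t \<Longrightarrow> t < b \<Longrightarrow> \<phi> t > 0 \<Longrightarrow> \<phi>' t \<le> 0"
    and start: "\<phi> a \<le> 0"
  shows "\<phi> b \<le> 0"
proof (rule ccontr)
  assume nb: "\<not> \<phi> b \<le> 0"
  define S where "S = {s \<in> {a..b}. \<phi> s \<le> 0}"
  have aS: "a \<in> S" using ab start by (auto simp: S_def)
  have bdd: "bdd_above S" by (auto simp: S_def bdd_above_def)
  define s0 where "s0 = Sup S"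
  have s0a: "a \<le> s0" using aS bdd by (simp add: s0_def cSup_upper)
  have s0b: "s0 \<le> b" using aS by (auto simp: s0_def S_def intro!: cSup_least)
  have cl: "closed S"
  proof -
    have "S = {a..b} \<inter> \<phi> -` {..0}" by (auto simp: S_def)
    moreover have "closedin (top_of_set {a..b}) ({a..b} \<inter> \<phi> -` {..0})"
      using continuous_closedin_preimage[OF cont closed_atMost] by simp
    ultimately show ?thesis using closedin_closed_trans by blast
  qed
  have s0S: "s0 \<in> S" unfolding s0_def using cl aS bdd closed_contains_Sup by blast
  hence ps0: "\<phi> s0 \<le> 0" by (simp add: S_def)
  have pos: "\<phi> t > 0" if "s0 < t" "t \<le> b" for t
  proof (rule ccontr)
    assume "\<not> \<phi> t > 0"
    hence "t \<in> S" using that s0a by (auto simp: S_def)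
    hence "t \<le> s0" using bdd by (simp add: s0_def cSup_upper)
    thus False using that by simp
  qed
  have lt: "s0 < b" using s0b ps0 nb by (cases "s0 = b") auto
  have "continuous_on {s0..b} \<phi>" using cont s0a by (auto intro: continuous_on_subset)
  moreover have "\<And>x. s0 < x \<Longrightarrow> x < b \<Longrightarrow> \<phi> differentiable (at x)"
    using der s0a real_differentiable_def by (meson le_less_trans)
  ultimately obtain l z where z: "s0 < z" "z < b" "(\<phi> has_real_derivative l) (at z)" "\<phi> b - \<phi> s0 = (b - s0) * l"
    using MVT[OF lt] by blast
  have "l = \<phi>' z" using z(3) der[of z] z s0a DERIV_unique by fastforce
  moreover have "\<phi>' z \<le> 0" using sgn[of z] pos[of z] z s0a by auto
  ultimately have "(b - s0) * l \<le> 0" using lt by (simp add: mult_nonneg_nonpos)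
  hence "\<phi> b \<le> \<phi> s0" using z(4) by linarith
  thus False using ps0 nb by simp
qed

lemma gronwall_upper:
  fixes g gh D G :: "real \<Rightarrow> real"
  assumes t01: "t0 \<le> t1" and cg: "continuous_on {t0..t1} g" and cgh: "continuous_on {t0..t1} gh"
    and dg: "\<And>t. t0 < t \<Longrightarrow> t < t1 \<Longrightarrow> (g has_real_derivative (D (g t) + G (g t))) (at t)"
    and dgh: "\<And>t. t0 < t \<Longrightarrow> t < t1 \<Longrightarrow> (gh has_real_derivative G (gh t)) (at t)"
    and Db: "\<And>y. \<bar>D y\<bar> \<le> M" and GL: "\<And>y z. \<bar>G y - G z\<bar> \<le> lam * \<bar>y - z\<bar>"
    and lam: "lam > 0" and e0: "e0 \<ge> 0" and st: "g t0 - gh t0 \<le> e0"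
  shows "g t1 - gh t1 \<le> (e0 + M/lam) * exp (lam*(t1 - t0))"
proof -
  define \<phi> where "\<phi> t = (g t - gh t) * exp (-lam*(t - t0)) - (e0 + M/lam) + (M/lam) * exp (-lam*(t - t0))" for t
  define \<phi>' where "\<phi>' t = ((D (g t) + G (g t)) - G (gh t) - lam * (g t - gh t) - M) * exp (-lam*(t - t0))" for t
  have M0: "M \<ge> 0" using Db[of 0] by linarith
  have "\<phi> t1 \<le> 0"
  proof (rule nonpos_stays[OF t01, of \<phi> \<phi>'])
    show "continuous_on {t0..t1} \<phi>" unfolding \<phi>_def using cg cgh by (intro continuous_intros) auto
    show "(\<phi> has_real_derivative \<phi>' t) (at t)" if "t0 < t" "t < t1" for t
      unfolding \<phi>_def[abs_def] \<phi>'_def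
      by (rule derivative_eq_intros dg[OF that] dgh[OF that] refl | simp)+ (use lam in \<open>simp add: algebra_simps\<close>)
    show "\<phi>' t \<le> 0" if "t0 < t" "t < t1" "\<phi> t > 0" for t
    proof -
      have e1: "exp (-lam*(t - t0)) \<le> 1" using that lam by simp
      have ep: "exp (-lam*(t - t0)) > 0" by simp
      have "(M/lam) * (1 - exp (-lam*(t - t0))) \<ge> 0" using M0 lam e1 by simp
      moreover have "\<phi> t = (g t - gh t) * exp (-lam*(t - t0)) - e0 - (M/lam) * (1 - exp (-lam*(t - t0)))"
        unfolding \<phi>_def by (simp add: algebra_simps)
      ultimately have "(g t - gh t) * exp (-lam*(t - t0)) > 0" using that(3) e0 by linarith
      hence wpos: "g t - gh t > 0" using ep by (simp add: zero_less_mult_iff)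
      have "(D (g t) + G (g t)) - G (gh t) - lam * (g t - gh t) - M \<le> 0"
        using Db[of "g t"] GL[of "g t" "gh t"] wpos by simp
      thus ?thesis unfolding \<phi>'_def using ep by (simp add: mult_nonpos_nonneg)
    qed
    show "\<phi> t0 \<le> 0" using st by (simp add: \<phi>_def)
  qed
  hence "(g t1 - gh t1) * exp (-lam*(t1 - t0)) \<le> (e0 + M/lam) - (M/lam) * exp (-lam*(t1 - t0))"
    by (simp add: \<phi>_def)
  also have "\<dots> \<le> (e0 + M/lam)" using M0 lam by simp
  finally have A: "(g t1 - gh t1) * exp (-lam*(t1 - t0)) \<le> (e0 + M/lam)" .
  have B: "exp (-lam*(t1 - t0)) * exp (lam*(t1 - t0)) = 1" by (simp add: exp_minus[symmetric] exp_add[symmetric])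
  have "(g t1 - gh t1) = (g t1 - gh t1) * exp (-lam*(t1 - t0)) * exp (lam*(t1 - t0))"
    using B by (simp add: mult.assoc)
  also have "\<dots> \<le> (e0 + M/lam) * exp (lam*(t1 - t0))" using A by (rule mult_right_mono) simp
  finally show ?thesis .
qed

lemma gronwall_abs:
  fixes g gh D G :: "real \<Rightarrow> real"
  assumes t01: "t0 \<le> t1" and cg: "continuous_on {t0..t1} g" and cgh: "continuous_on {t0..t1} gh"
    and dg: "\<And>t. t0 < t \<Longrightarrow> t < t1 \<Longrightarrow> (g has_real_derivative (D (g t) + G (g t))) (at t)"
    and dgh: "\<And>t. t0 < t \<Longrightarrow> t < t1 \<Longrightarrow> (gh has_real_derivative G (gh t)) (at t)"
    and Db: "\<And>y. \<bar>D y\<bar> \<le> M" and GL: "\<And>y z. \<bar>G y - G z\<bar> \<le> lam * \<bar>y - z\<bar>"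
    and lam: "lam > 0" and st: "\<bar>g t0 - gh t0\<bar> \<le> e0"
  shows "\<bar>g t1 - gh t1\<bar> \<le> (e0 + M/lam) * exp (lam*(t1 - t0))"
proof -
  have e0: "e0 \<ge> 0" using st by linarith
  have u: "g t1 - gh t1 \<le> (e0 + M/lam) * exp (lam*(t1 - t0))"
    by (rule gronwall_upper[OF t01 cg cgh dg dgh Db GL lam e0]) (use st in auto)
  have "(\<lambda>t. - g t) t1 - (\<lambda>t. - gh t) t1 \<le> (e0 + M/lam) * exp (lam*(t1 - t0))"
  proof (rule gronwall_upper[OF t01, where D="\<lambda>y. - D (- y)" and G="\<lambda>y. - G (- y)"])
    show "continuous_on {t0..t1} (\<lambda>t. - g t)" using cg by (intro continuous_intros)
    show "continuous_on {t0..t1} (\<lambda>t. - gh t)" using cgh by (intro continuous_intros)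
    show "((\<lambda>t. - g t) has_real_derivative (- D (- (- g t)) + - G (- (- g t)))) (at t)" if "t0 < t" "t < t1" for t
      using DERIV_minus[OF dg[OF that]] by simp
    show "((\<lambda>t. - gh t) has_real_derivative (- G (- (- gh t)))) (at t)" if "t0 < t" "t < t1" for t
      using DERIV_minus[OF dgh[OF that]] by simp
    show "\<bar>- D (- y)\<bar> \<le> M" for y using Db[of "-y"] by simp
    show "\<bar>- G (- y) - - G (- z)\<bar> \<le> lam * \<bar>y - z\<bar>" for y z using GL[of "-z" "-y"] by (simp add: abs_minus_commute)
  qed (use lam e0 st in auto)
  with u show ?thesis by simp
qed

lemma sin_two_arctan: "sin (2 * arctan z) = 2 * z / (1 + z\<^sup>2)"
proof -
  have q: "sqrt (1 + z\<^sup>2) * sqrt (1 + z\<^sup>2) = 1 + z\<^sup>2" by (simp add: add_pos_nonneg)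
  show ?thesis unfolding sin_double sin_arctan cos_arctan using q by (simp add: field_simps)
qed

definition ideal :: "real \<Rightarrow> real \<Rightarrow> real \<Rightarrow> real \<Rightarrow> real \<Rightarrow> real" where
  "ideal p s z0 t0 t = p + arctan (z0 * exp (2 * pi * s * (t - t0))) / pi"

lemma ideal_deriv:
  "(ideal p s z0 t0 has_real_derivative s * sin (2*pi*(ideal p s z0 t0 t - p))) (at t)"
proof -
  define z where "z = z0 * exp (2 * pi * s * (t - t0))"
  have h: "2*pi*(ideal p s z0 t0 t - p) = 2 * arctan z" by (simp add: ideal_def z_def)
  have r: "s * sin (2*pi*(ideal p s z0 t0 t - p)) = s * (2 * z / (1 + z\<^sup>2))"
    by (subst h) (simp only: sin_two_arctan)
  have D1: "(ideal p s z0 t0 has_real_derivative (z0 * (exp (2 * pi * s * (t - t0)) * (2 * pi * s))) / (1 + z\<^sup>2) / pi) (at t)"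
    unfolding ideal_def[abs_def] z_def
    apply (rule derivative_eq_intros refl | simp)+
    apply (simp add: field_simps)
    done
  have eq: "(z0 * (exp (2 * pi * s * (t - t0)) * (2 * pi * s))) / (1 + z\<^sup>2) / pi = s * (2 * z / (1 + z\<^sup>2))"
  proof -
    have "z0 * (exp (2 * pi * s * (t - t0)) * (2 * pi * s)) = pi * (s * (2 * z))" by (simp add: z_def mult_ac)
    thus ?thesis by simp
  qed
  show ?thesis using D1 unfolding eq r[symmetric] .
qed

lemma ideal_cont: "continuous_on S (ideal p s z0 t0)"
  unfolding ideal_def[abs_def] by (intro continuous_intros) simp

lemma ideal_start: "ideal p s z0 t0 t0 = p + arctan z0 / pi"
  by (simp add: ideal_def)

lemma ideal_end: "ideal p s z0 t0 (t0 + T) = p + arctan (z0 * exp (2 * pi * s * T)) / pi"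
  by (simp add: ideal_def)

lemma abs_sin_diff_le: "\<bar>sin (x::real) - sin y\<bar> \<le> \<bar>x - y\<bar>"
proof -
  have "\<bar>sin x - sin y\<bar> = 2 * \<bar>sin ((x - y) / 2)\<bar> * \<bar>cos ((x + y) / 2)\<bar>"
    unfolding sin_diff_sin by (simp add: abs_mult)
  also have "\<dots> \<le> 2 * \<bar>(x - y) / 2\<bar> * 1"
    by (intro mult_mono abs_sin_x_le_abs_x) auto
  finally show ?thesis by simp
qed

lemma sin_lip: "\<bar>s * sin (2*pi*(y - p)) - s * sin (2*pi*(z - p))\<bar> \<le> (2 * pi * \<bar>s\<bar>) * \<bar>y - z\<bar>"
proof -
  have "\<bar>sin (2*pi*(y - p)) - sin (2*pi*(z - p))\<bar> \<le> \<bar>2*pi*(y - p) - 2*pi*(z - p)\<bar>"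
    by (rule abs_sin_diff_le)
  also have "\<bar>2*pi*(y - p) - 2*pi*(z - p)\<bar> = 2*pi*\<bar>y - z\<bar>"
  proof -
    have "2*pi*(y - p) - 2*pi*(z - p) = (2*pi) * (y - z)" by (simp add: algebra_simps)
    thus ?thesis by (simp add: abs_mult)
  qed
  finally have "\<bar>sin (2*pi*(y - p)) - sin (2*pi*(z - p))\<bar> \<le> 2*pi*\<bar>y - z\<bar>" .
  hence "\<bar>s\<bar> * \<bar>sin (2*pi*(y - p)) - sin (2*pi*(z - p))\<bar> \<le> \<bar>s\<bar> * (2*pi*\<bar>y - z\<bar>)"
    by (rule mult_left_mono) simp
  moreover have "s * sin (2*pi*(y - p)) - s * sin (2*pi*(z - p)) = s * (sin (2*pi*(y - p)) - sin (2*pi*(z - p)))"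
    by (simp add: right_diff_distrib)
  ultimately show ?thesis by (simp add: abs_mult mult_ac)
qed

lemma smooth_diff: "smooth_fun f \<Longrightarrow> f differentiable (at x)"
  unfolding smooth_fun_def by (metis funpow_0)

lemma smooth_cont: "smooth_fun f \<Longrightarrow> continuous_on S f"
  by (meson continuous_at_imp_continuous_on differentiable_imp_continuous_within smooth_diff)

lemma deriv_periodic:
  fixes f :: "real \<Rightarrow> real"
  assumes per: "\<And>x. f (x + 1) = f x" and dif: "\<And>x. f differentiable (at x)"
  shows "deriv f (x + 1) = deriv f x"
proof -
  obtain D where D: "(f has_real_derivative D) (at (x + 1))"
    using dif[of "x+1"] real_differentiable_def by blast
  hence "((\<lambda>y. f (y + 1)) has_real_derivative D) (at x)" unfolding DERIV_shift .
  moreover have "(\<lambda>y. f (y + 1)) = f" using per by auto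
  ultimately have "(f has_real_derivative D) (at x)" by simp
  thus ?thesis using D by (simp add: DERIV_imp_deriv)
qed

lemma periodic_nat: fixes f :: "real \<Rightarrow> real" shows "(\<And>x. f (x + 1) = f x) \<Longrightarrow> f (x + real n) = f x"
proof (induction n arbitrary: x)
  case (Suc n)
  have "f (x + real (Suc n)) = f ((x + real n) + 1)" by (simp add: add_ac)
  thus ?case using Suc by simp
qed simp

lemma periodic_frac: fixes f :: "real \<Rightarrow> real" assumes "\<And>x. f (x + 1) = f x" shows "f x = f (x - of_int (floor x))"
proof (cases "floor x \<ge> 0")
  case True
  define n where "n = nat (floor x)"
  have n: "floor x = int n" using True by (simp add: n_def)
  have "f ((x - of_int (floor x)) + real n) = f (x - of_int (floor x))" by (rule periodic_nat[where f=f, OF assms])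
  moreover have "(x - of_int (floor x)) + real n = x" using n by simp
  ultimately show ?thesis by simp
next
  case False
  define n where "n = nat (- floor x)"
  have n: "floor x = - int n" using False by (simp add: n_def)
  have "f (x + real n) = f x" by (rule periodic_nat[where f=f, OF assms])
  moreover have "x - of_int (floor x) = x + real n" using n by simp
  ultimately show ?thesis by metis
qed

lemma periodic_bounded:
  fixes f :: "real \<Rightarrow> real"
  assumes per: "\<And>x. f (x + 1) = f x" and cont: "continuous_on UNIV f"
  shows "\<exists>B. \<forall>x. \<bar>f x\<bar> \<le> B"
proof -
  have "compact (f ` {0..1})" by (rule compact_continuous_image) (use cont in \<open>auto intro: continuous_on_subset\<close>)
  then obtain B where B: "\<And>y. y \<in> f ` {0..1} \<Longrightarrow> norm y \<le> B"
    using compact_imp_bounded bounded_iff by metis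
  have "\<bar>f x\<bar> \<le> B" for x
  proof -
    have "0 \<le> x - of_int (floor x)" "x - of_int (floor x) \<le> 1"
      using floor_correct[of x] by (simp_all add: algebra_simps)
    hence "x - of_int (floor x) \<in> {0..1}" by auto
    hence "\<bar>f (x - of_int (floor x))\<bar> \<le> B" using B by auto
    thus ?thesis using periodic_frac[where f=f, OF per, of x] by simp
  qed
  thus ?thesis by blast
qed

lemma drift_per:
  assumes a_per: "one_periodic a" and b_per: "\<And>k. one_periodic (b k)" and b_sm: "\<And>k. smooth_fun (b k)"
  shows "drift_term a b (x + 1) = drift_term a b x"
proof -
  have "(\<lambda>k. deriv (b k) (x + 1) * b k (x + 1)) = (\<lambda>k. deriv (b k) x * b k x)"
  proof
    fix k
    have p: "\<And>y. b k (y + 1) = b k y" using b_per[of k] by (simp add: one_periodic_def)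
    have "deriv (b k) (x + 1) = deriv (b k) x"
      by (rule deriv_periodic) (use p smooth_diff[OF b_sm[of k]] in auto)
    thus "deriv (b k) (x + 1) * b k (x + 1) = deriv (b k) x * b k x" using p by simp
  qed
  thus ?thesis using a_per by (simp add: drift_term_def one_periodic_def)
qed

lemma sol_phase:
  fixes G :: "real \<Rightarrow> real"
  assumes sol: "is_ctrl_sol c \<sigma> a b h x g"
    and t0: "0 \<le> t0" and t01: "t0 < t1"
    and hconst: "\<And>s. t0 \<le> s \<Longrightarrow> s < t1 \<Longrightarrow> h s = (u, v)"
    and field: "\<And>y. \<sigma> * (b 1 y * u + b (-1) y * v) = G y"
    and contD: "continuous_on UNIV (drift_term a b)" and contG: "continuous_on UNIV G"
  shows "continuous_on {t0..t1} g"
    and "\<And>t. t0 < t \<Longrightarrow> t < t1 \<Longrightarrow>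
           (g has_real_derivative ((\<lambda>y. c + \<sigma>\<^sup>2 * drift_term a b y) (g t) + G (g t))) (at t)"
proof -
  have cg0: "continuous_on {0..} g" and eq: "\<And>t. t \<ge> 0 \<Longrightarrow> (\<lambda>s. ctrl_rhs c \<sigma> a b h s (g s)) integrable_on {0..t} \<and>
      g t = x + integral {0..t} (\<lambda>s. ctrl_rhs c \<sigma> a b h s (g s))"
    using sol unfolding is_ctrl_sol_def by auto
  show cg: "continuous_on {t0..t1} g" using cg0 t0 by (auto intro: continuous_on_subset)
  define F where "F y = c + \<sigma>\<^sup>2 * drift_term a b y + G y" for y
  define f where "f s = ctrl_rhs c \<sigma> a b h s (g s)" for s
  have fF: "f s = F (g s)" if "t0 \<le> s" "s < t1" for s
    using hconst[OF that] field[of "g s"] by (simp add: f_def F_def ctrl_rhs_def algebra_simps)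
  have contF: "continuous_on UNIV F" unfolding F_def[abs_def] using contD contG
    by (intro continuous_intros) (auto intro: continuous_on_subset)
  have cFg: "continuous_on {t0..t1} (\<lambda>s. F (g s))"
    using continuous_on_compose2[OF contF cg] by auto
  have rep: "g t = g t0 + integral {t0..t} (\<lambda>s. F (g s))" if "t0 \<le> t" "t \<le> t1" for t
  proof -
    have it: "f integrable_on {0..t}" using eq[of t] that t0 by (simp add: f_def[abs_def])
    have "integral {0..t0} f + integral {t0..t} f = integral {0..t} f"
      by (rule Henstock_Kurzweil_Integration.integral_combine[OF t0 that(1) it])
    moreover have "integral {t0..t} f = integral {t0..t} (\<lambda>s. F (g s))"
    proof (rule integral_spike[of "{t}"])
      show "negligible {t}" by simp
      show "F (g s) = f s" if "s \<in> {t0..t} - {t}" for s using that fF[of s] \<open>t \<le> t1\<close> by auto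
    qed
    moreover have "g t = x + integral {0..t} f" "g t0 = x + integral {0..t0} f"
      using eq[of t] eq[of t0] that t0 by (simp_all add: f_def[abs_def])
    ultimately show ?thesis by simp
  qed
  fix t assume tt: "t0 < t" "t < t1"
  have "((\<lambda>t. integral {t0..t} (\<lambda>s. F (g s))) has_real_derivative F (g t)) (at t within {t0..t1})"
    by (rule integral_has_real_derivative[OF cFg]) (use tt in auto)
  hence "((\<lambda>t. integral {t0..t} (\<lambda>s. F (g s))) has_real_derivative F (g t)) (at t)"
    using tt by (simp add: at_within_Icc_at)
  hence d: "((\<lambda>t. g t0 + integral {t0..t} (\<lambda>s. F (g s))) has_real_derivative F (g t)) (at t)"
    using DERIV_add[OF DERIV_const[of "g t0" "at t"]] by simp
  have "(g has_real_derivative F (g t)) (at t)"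
  proof (rule has_field_derivative_transform_within_open[OF d, of "{t0<..<t1}"])
    show "open {t0<..<t1}" by simp
    show "t \<in> {t0<..<t1}" using tt by simp
    show "g t0 + integral {t0..y} (\<lambda>s. F (g s)) = g y" if "y \<in> {t0<..<t1}" for y
      using rep[of y] that by simp
  qed
  thus "(g has_real_derivative ((\<lambda>y. c + \<sigma>\<^sup>2 * drift_term a b y) (g t) + G (g t))) (at t)"
    by (simp add: F_def)
qed

lemma step:
  fixes s p p' :: real
  assumes sol: "is_ctrl_sol c \<sigma> a b h x g" and t0: "0 \<le> t0" and T: "T > 0" and t1: "t1 = t0 + T"
    and hconst: "\<And>r. t0 \<le> r \<Longrightarrow> r < t1 \<Longrightarrow> h r = (u, v)"
    and field: "\<And>y. \<sigma> * (b 1 y * u + b (-1) y * v) = s * sin (2*pi*(y - p))"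
    and contD: "continuous_on UNIV (drift_term a b)"
    and Db: "\<And>y. \<bar>c + \<sigma>\<^sup>2 * drift_term a b y\<bar> \<le> M"
    and s: "s \<noteq> 0"
    and per: "\<And>y. sin (2*pi*(y - p')) = sin (2*pi*(y - p))"
    and ys: "p' + arctan z0 / pi = ys" and ye: "p' + arctan (z0 * exp (2 * pi * s * T)) / pi = ye"
    and st: "\<bar>g t0 - ys\<bar> \<le> e"
  shows "\<bar>g t1 - ye\<bar> \<le> (e + M / (2*pi*\<bar>s\<bar>)) * exp (2*pi*\<bar>s\<bar>*T)"
proof -
  have t01: "t0 < t1" using T t1 by simp
  have contG: "continuous_on UNIV (\<lambda>y. s * sin (2*pi*(y - p)))" by (intro continuous_intros)
  note ph = sol_phase[OF sol t0 t01 hconst field contD contG]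
  have "\<bar>g t1 - ideal p' s z0 t0 t1\<bar> \<le> (e + M / (2*pi*\<bar>s\<bar>)) * exp ((2*pi*\<bar>s\<bar>)*(t1 - t0))"
  proof (rule gronwall_abs[where D="\<lambda>y. c + \<sigma>\<^sup>2 * drift_term a b y" and G="\<lambda>y. s * sin (2*pi*(y - p))"])
    show "t0 \<le> t1" using t01 by simp
    show "continuous_on {t0..t1} g" by (rule ph(1))
    show "continuous_on {t0..t1} (ideal p' s z0 t0)" by (rule ideal_cont)
    show "(g has_real_derivative (c + \<sigma>\<^sup>2 * drift_term a b (g t) + s * sin (2*pi*(g t - p)))) (at t)"
      if "t0 < t" "t < t1" for t using ph(2)[of t] that by auto
    show "(ideal p' s z0 t0 has_real_derivative s * sin (2*pi*(ideal p' s z0 t0 t - p))) (at t)" for t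
      using ideal_deriv[of p' s z0 t0 t] per by simp
    show "\<bar>c + \<sigma>\<^sup>2 * drift_term a b y\<bar> \<le> M" for y by (rule Db)
    show "\<bar>s * sin (2*pi*(y - p)) - s * sin (2*pi*(z - p))\<bar> \<le> (2*pi*\<bar>s\<bar>) * \<bar>y - z\<bar>" for y z
      by (rule sin_lip)
    show "2*pi*\<bar>s\<bar> > 0" using s by simp
    show "\<bar>g t0 - ideal p' s z0 t0 t0\<bar> \<le> e" using st ys by (simp add: ideal_start)
  qed
  moreover have "ideal p' s z0 t0 t1 = ye" using ye t1 by (simp add: ideal_def)
  moreover have "(2*pi*\<bar>s\<bar>)*(t1 - t0) = 2*pi*\<bar>s\<bar>*T" using t1 by simp
  ultimately show ?thesis by simp
qed

lemma ctrl_exists: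
  assumes span: "{(\<lambda>x. u * b 1 x + v * b (-1) x) | u v. True}
               = {(\<lambda>x. L * sin (2 * pi * x + \<eta>)) | L \<eta>. True}"
    and sig: "\<sigma> > 0"
  shows "\<exists>u v. \<forall>y. \<sigma> * (b 1 y * u + b (-1) y * v) = s * sin (2*pi*(y - p))"
proof -
  have "(\<lambda>x. (s/\<sigma>) * sin (2 * pi * x + (- 2*pi*p))) \<in> {(\<lambda>x. L * sin (2 * pi * x + \<eta>)) | L \<eta>. True}"
    by blast
  hence "(\<lambda>x. (s/\<sigma>) * sin (2 * pi * x + (- 2*pi*p))) \<in> {(\<lambda>x. u * b 1 x + v * b (-1) x) | u v. True}"
    using span by simp
  then obtain u v where uv: "(\<lambda>x. (s/\<sigma>) * sin (2 * pi * x + (- 2*pi*p))) = (\<lambda>x. u * b 1 x + v * b (-1) x)"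
    by blast
  have "\<sigma> * (b 1 y * u + b (-1) y * v) = s * sin (2*pi*(y - p))" for y
  proof -
    have "u * b 1 y + v * b (-1) y = (s/\<sigma>) * sin (2 * pi * y + (- 2*pi*p))" using fun_cong[OF uv, of y] by simp
    moreover have "2 * pi * y + (- 2*pi*p) = 2*pi*(y - p)" by (simp add: algebra_simps)
    ultimately show ?thesis using sig by (simp add: mult_ac)
  qed
  thus ?thesis by blast
qed



lemma sol_init: "is_ctrl_sol c \<sigma> a b h x g \<Longrightarrow> g 0 = x"
  unfolding is_ctrl_sol_def by auto

lemma errstep: fixes cc E e :: real
  assumes "e \<le> real k * cc * E^k" "E \<ge> 1" "cc \<ge> 0"
  shows "(e + cc) * E \<le> real (Suc k) * cc * E^(Suc k)"
proof -
  have "E \<le> E^(Suc k)" using power_increasing[of 1 "Suc k" E] assms(2) by simp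
  hence "cc * E \<le> cc * E^(Suc k)" using assms(3) by (simp add: mult_left_mono)
  moreover have "e * E \<le> real k * cc * E^k * E" using assms by (simp add: mult_right_mono)
  ultimately have "(e + cc) * E \<le> real k * cc * E^(Suc k) + cc * E^(Suc k)"
    by (simp add: algebra_simps)
  thus ?thesis by (simp add: algebra_simps)
qed

lemma errle5: fixes cc E :: real
  assumes "k \<le> 5" "E \<ge> 1" "cc \<ge> 0"
  shows "real k * cc * E^k \<le> 5 * cc * E^5"
proof -
  have "E^k \<le> E^5" using assms by (simp add: power_increasing)
  moreover have "real k \<le> 5" using assms by simp
  ultimately show ?thesis using assms by (simp add: mult_mono mult_right_mono)
qed

theorem lemma4p14:
  fixes c \<sigma> :: real and a :: "real \<Rightarrow> real" and b :: "int \<Rightarrow> real \<Rightarrow> real"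
  assumes sigma_pos: "\<sigma> > 0"
    and a_smooth: "smooth_fun a" and a_per: "one_periodic a"
    and b_smooth: "\<And>k. smooth_fun (b k)" and b_per: "\<And>k. one_periodic (b k)"
    and b_summable: "\<And>x. (\<lambda>k. deriv (b k) x * b k x) summable_on UNIV"
    and drift_smooth: "smooth_fun (drift_term a b)"
    and span: "{(\<lambda>x. u * b 1 x + v * b (-1) x) | u v. True}
               = {(\<lambda>x. L * sin (2 * pi * x + \<eta>)) | L \<eta>. True}"
    and eps: "\<epsilon> > 0"
  shows "\<exists>T>0. \<exists>h. in_H h \<and>
    (\<forall>g1 g2 g3. is_ctrl_sol c \<sigma> a b h 0 g1 \<and> is_ctrl_sol c \<sigma> a b h (1/3) g2
        \<and> is_ctrl_sol c \<sigma> a b h (-1/3) g3 \<longrightarrow>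
      0 - \<epsilon> \<le> g3 T \<and> g3 T < g2 T \<and> g2 T \<le> 0 + \<epsilon> \<and>
      1/3 - \<epsilon> \<le> g1 (3*T) \<and> g1 (3*T) < g3 (3*T) + 1 \<and> g3 (3*T) + 1 \<le> 1/3 + \<epsilon> \<and>
      -1/3 - \<epsilon> \<le> g2 (5*T) - 1 \<and> g2 (5*T) - 1 < g1 (5*T) \<and> g1 (5*T) \<le> -1/3 + \<epsilon>)"
proof -
  have contD: "continuous_on UNIV (drift_term a b)" using drift_smooth by (rule smooth_cont)
  have dper: "\<And>x. drift_term a b (x + 1) = drift_term a b x"
    by (rule drift_per[OF a_per b_per b_smooth])
  obtain B where B: "\<And>x. \<bar>drift_term a b x\<bar> \<le> B" using periodic_bounded[OF dper contD] by blast
  define M where "M = \<bar>c\<bar> + \<sigma>\<^sup>2 * B"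
  have Db: "\<bar>c + \<sigma>\<^sup>2 * drift_term a b y\<bar> \<le> M" for y
  proof -
    have "\<bar>c + \<sigma>\<^sup>2 * drift_term a b y\<bar> \<le> \<bar>c\<bar> + \<sigma>\<^sup>2 * \<bar>drift_term a b y\<bar>"
      by (metis abs_mult abs_power2 abs_triangle_ineq)
    also have "\<dots> \<le> \<bar>c\<bar> + \<sigma>\<^sup>2 * B" using B[of y] by (simp add: mult_left_mono)
    finally show ?thesis by (simp add: M_def)
  qed
  have M0: "M \<ge> 0" using Db[of 0] by linarith
  define ep where "ep = min \<epsilon> 1"
  have ep: "0 < ep" "ep \<le> 1" "ep \<le> \<epsilon>" using eps by (auto simp: ep_def)
  define q where "q = ep / 4"
  define E where "E = 1 / q"
  define \<rho> where "\<rho> = sqrt 3 * q"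
  define aa where "aa = arctan \<rho> / pi"
  have q0: "q > 0" using ep by (simp add: q_def)
  have qE: "q * E = 1" using q0 by (simp add: E_def)
  have E4: "E \<ge> 4" using ep by (simp add: E_def q_def field_simps)
  have E1: "E \<ge> 1" using E4 by simp
  have rho0: "\<rho> > 0" using q0 by (simp add: \<rho>_def)
  have aa0: "aa > 0" using rho0 arctan_less_iff[of 0 \<rho>] by (simp add: aa_def)
  have aaeps: "2 * aa \<le> \<epsilon>"
  proof -
    have "arctan \<rho> \<le> \<rho>" using rho0 by (simp add: arctan_le_self)
    moreover have "\<rho> \<le> 2 * q" using q0 unfolding \<rho>_def
      by (intro mult_right_mono) (auto simp: real_sqrt_le_iff[of 3 4, simplified])
    ultimately have "arctan \<rho> \<le> 2 * q" by simp
    hence "aa \<le> 2 * q / pi" by (simp add: aa_def divide_right_mono)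
    also have "\<dots> \<le> 2 * q / 3" using pi_gt3 q0 by (intro divide_left_mono) auto
    finally show ?thesis using ep by (simp add: q_def)
  qed
  define K where "K = 5 * (M + 1) * E^5 / (2 * pi * aa) + 1"
  have K0: "K > 0" using M0 aa0 E1 by (simp add: K_def add_pos_nonneg)
  define T where "T = ln E / (2 * pi * K)"
  have T0: "T > 0" using E4 K0 by (simp add: T_def)
  have expE: "exp (2 * pi * K * T) = E" using K0 E4 by (simp add: T_def)
  have expq: "exp (2 * pi * (-K) * T) = q"
  proof -
    have "exp (2 * pi * (-K) * T) = inverse (exp (2 * pi * K * T))" by (simp add: exp_minus[symmetric])
    thus ?thesis using expE qE q0 by (simp add: E_def)
  qed
  define cc where "cc = M / (2 * pi * K)"
  have cc0: "cc \<ge> 0" using M0 K0 by (simp add: cc_def)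
  have Delta: "5 * cc * E^5 < aa"
  proof -
    have "2 * pi * K * aa > 5 * (M + 1) * E^5" using aa0 K0 pi_gt_zero
      by (simp add: K_def field_simps)
    moreover have "5 * M * E^5 < 5 * (M + 1) * E^5" using E1 by simp
    ultimately have "5 * M * E^5 < 2 * pi * K * aa" by linarith
    thus ?thesis using K0 pi_gt_zero by (simp add: cc_def field_simps)
  qed

  obtain u0 v0 where uv0: "\<And>y. \<sigma> * (b 1 y * u0 + b (-1) y * v0) = (-K) * sin (2*pi*(y - 0))"
    using ctrl_exists[OF span sigma_pos] by blast
  obtain u1 v1 where uv1: "\<And>y. \<sigma> * (b 1 y * u1 + b (-1) y * v1) = K * sin (2*pi*(y - 0))"
    using ctrl_exists[OF span sigma_pos] by blast
  obtain u2 v2 where uv2: "\<And>y. \<sigma> * (b 1 y * u2 + b (-1) y * v2) = (-K) * sin (2*pi*(y - 1/3))"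
    using ctrl_exists[OF span sigma_pos] by blast
  obtain u3 v3 where uv3: "\<And>y. \<sigma> * (b 1 y * u3 + b (-1) y * v3) = K * sin (2*pi*(y - 1/3))"
    using ctrl_exists[OF span sigma_pos] by blast
  obtain u4 v4 where uv4: "\<And>y. \<sigma> * (b 1 y * u4 + b (-1) y * v4) = (-K) * sin (2*pi*(y - (-1/3)))"
    using ctrl_exists[OF span sigma_pos] by blast
  define h where "h r = (if r < T then (u0, v0) else if r < 2*T then (u1, v1) else if r < 3*T then (u2, v2)
      else if r < 4*T then (u3, v3) else if r < 5*T then (u4, v4) else (0, 0))" for r :: real
  define vv where "vv i = (if i = 0 then (u0, v0) else if i = 1 then (u1, v1) else if i = 2 then (u2, v2)
      else if i = 3 then (u3, v3) else (u4, v4))" for i :: nat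
  have inH: "in_H h"
    unfolding in_H_def
  proof (intro exI conjI allI impI)
    show "real 0 * T = 0" by simp
    show "real i * T < real (Suc i) * T" if "i < 5" for i using T0 by (simp add: distrib_right)
    show "h r = vv i" if "i < 5" "real i * T \<le> r \<and> r < real (Suc i) * T" for i r
    proof -
      have "i = 0 \<or> i = 1 \<or> i = 2 \<or> i = 3 \<or> i = 4" using that(1) by auto
      thus ?thesis using that(2) T0 by (auto simp: h_def vv_def)
    qed
    show "h r = (0, 0)" if "real 5 * T \<le> r" for r using that T0 by (simp add: h_def)
  qed

  have ph1: "\<bar>g (T) - ye\<bar> \<le> (e + cc) * E"
    if sol: "is_ctrl_sol c \<sigma> a b h x g" and per: "\<And>y. sin (2*pi*(y - p')) = sin (2*pi*(y - (0)))"
      and ys: "p' + arctan z0 / pi = ys" and ye: "p' + arctan (z0 * q) / pi = ye" and st: "\<bar>g (0) - ys\<bar> \<le> e"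
    for x g p' z0 ys ye e
  proof -
    have "\<bar>g (T) - ye\<bar> \<le> (e + M / (2*pi*\<bar>-K\<bar>)) * exp (2*pi*\<bar>-K\<bar>*T)"
    proof (rule step[OF sol _ T0 _ _ uv0 contD Db _ per ys _ st])
      show "(0::real) \<le> 0" using T0 by simp
      show "T = 0 + T" by simp
      show "h r = (u0, v0)" if "(0) \<le> r" "r < T" for r using that T0 by (simp add: h_def)
      show "-K \<noteq> 0" using K0 by simp
      show "p' + arctan (z0 * exp (2 * pi * (-K) * T)) / pi = ye" using ye expq by simp
    qed
    thus ?thesis using K0 expE by (simp add: cc_def)
  qed

  have ph2: "\<bar>g (2*T) - ye\<bar> \<le> (e + cc) * E"
    if sol: "is_ctrl_sol c \<sigma> a b h x g" and per: "\<And>y. sin (2*pi*(y - p')) = sin (2*pi*(y - (0)))"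
      and ys: "p' + arctan z0 / pi = ys" and ye: "p' + arctan (z0 * E) / pi = ye" and st: "\<bar>g (T) - ys\<bar> \<le> e"
    for x g p' z0 ys ye e
  proof -
    have "\<bar>g (2*T) - ye\<bar> \<le> (e + M / (2*pi*\<bar>K\<bar>)) * exp (2*pi*\<bar>K\<bar>*T)"
    proof (rule step[OF sol _ T0 _ _ uv1 contD Db _ per ys _ st])
      show "(0::real) \<le> T" using T0 by simp
      show "2*T = T + T" by simp
      show "h r = (u1, v1)" if "(T) \<le> r" "r < 2*T" for r using that T0 by (simp add: h_def)
      show "K \<noteq> 0" using K0 by simp
      show "p' + arctan (z0 * exp (2 * pi * (K) * T)) / pi = ye" using ye expE by simp
    qed
    thus ?thesis using K0 expE by (simp add: cc_def)
  qed

  have ph3: "\<bar>g (3*T) - ye\<bar> \<le> (e + cc) * E"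
    if sol: "is_ctrl_sol c \<sigma> a b h x g" and per: "\<And>y. sin (2*pi*(y - p')) = sin (2*pi*(y - (1/3)))"
      and ys: "p' + arctan z0 / pi = ys" and ye: "p' + arctan (z0 * q) / pi = ye" and st: "\<bar>g (2*T) - ys\<bar> \<le> e"
    for x g p' z0 ys ye e
  proof -
    have "\<bar>g (3*T) - ye\<bar> \<le> (e + M / (2*pi*\<bar>-K\<bar>)) * exp (2*pi*\<bar>-K\<bar>*T)"
    proof (rule step[OF sol _ T0 _ _ uv2 contD Db _ per ys _ st])
      show "(0::real) \<le> 2*T" using T0 by simp
      show "3*T = 2*T + T" by simp
      show "h r = (u2, v2)" if "(2*T) \<le> r" "r < 3*T" for r using that T0 by (simp add: h_def)
      show "-K \<noteq> 0" using K0 by simp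
      show "p' + arctan (z0 * exp (2 * pi * (-K) * T)) / pi = ye" using ye expq by simp
    qed
    thus ?thesis using K0 expE by (simp add: cc_def)
  qed

  have ph4: "\<bar>g (4*T) - ye\<bar> \<le> (e + cc) * E"
    if sol: "is_ctrl_sol c \<sigma> a b h x g" and per: "\<And>y. sin (2*pi*(y - p')) = sin (2*pi*(y - (1/3)))"
      and ys: "p' + arctan z0 / pi = ys" and ye: "p' + arctan (z0 * E) / pi = ye" and st: "\<bar>g (3*T) - ys\<bar> \<le> e"
    for x g p' z0 ys ye e
  proof -
    have "\<bar>g (4*T) - ye\<bar> \<le> (e + M / (2*pi*\<bar>K\<bar>)) * exp (2*pi*\<bar>K\<bar>*T)"
    proof (rule step[OF sol _ T0 _ _ uv3 contD Db _ per ys _ st])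
      show "(0::real) \<le> 3*T" using T0 by simp
      show "4*T = 3*T + T" by simp
      show "h r = (u3, v3)" if "(3*T) \<le> r" "r < 4*T" for r using that T0 by (simp add: h_def)
      show "K \<noteq> 0" using K0 by simp
      show "p' + arctan (z0 * exp (2 * pi * (K) * T)) / pi = ye" using ye expE by simp
    qed
    thus ?thesis using K0 expE by (simp add: cc_def)
  qed

  have ph5: "\<bar>g (5*T) - ye\<bar> \<le> (e + cc) * E"
    if sol: "is_ctrl_sol c \<sigma> a b h x g" and per: "\<And>y. sin (2*pi*(y - p')) = sin (2*pi*(y - (-1/3)))"
      and ys: "p' + arctan z0 / pi = ys" and ye: "p' + arctan (z0 * q) / pi = ye" and st: "\<bar>g (4*T) - ys\<bar> \<le> e"
    for x g p' z0 ys ye e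
  proof -
    have "\<bar>g (5*T) - ye\<bar> \<le> (e + M / (2*pi*\<bar>-K\<bar>)) * exp (2*pi*\<bar>-K\<bar>*T)"
    proof (rule step[OF sol _ T0 _ _ uv4 contD Db _ per ys _ st])
      show "(0::real) \<le> 4*T" using T0 by simp
      show "5*T = 4*T + T" by simp
      show "h r = (u4, v4)" if "(4*T) \<le> r" "r < 5*T" for r using that T0 by (simp add: h_def)
      show "-K \<noteq> 0" using K0 by simp
      show "p' + arctan (z0 * exp (2 * pi * (-K) * T)) / pi = ye" using ye expq by simp
    qed
    thus ?thesis using K0 expE by (simp add: cc_def)
  qed

  have at3: "arctan (sqrt 3) = pi / 3"
    using arctan_tan[of "pi/3"] tan_60 pi_gt_zero by simp
  have rq: "sqrt 3 * q = \<rho>" by (simp add: \<rho>_def)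
  have rE: "\<rho> * E = sqrt 3" using qE by (simp add: \<rho>_def mult.assoc)
  have arho: "arctan \<rho> = pi * aa" by (simp add: aa_def)
  define err where "err k = real k * cc * E^k" for k :: nat
  have ES: "(err k + cc) * E \<le> err (k + 1)" for k
    using errstep[of "err k" k cc E] E1 cc0 by (simp add: err_def)
  have ES1: "(err 0 + cc) * E \<le> err 1" proof -
    have eq: "err (0+1) = err 1" by (simp add: eval_nat_numeral)
    show ?thesis using ES[of 0] by (simp only: eq)
  qed
  have ES2: "(err 1 + cc) * E \<le> err 2" proof -
    have eq: "err (1+1) = err 2" by (simp add: eval_nat_numeral)
    show ?thesis using ES[of 1] by (simp only: eq)
  qed
  have ES3: "(err 2 + cc) * E \<le> err 3" proof -
    have eq: "err (2+1) = err 3" by (simp add: eval_nat_numeral)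
    show ?thesis using ES[of 2] by (simp only: eq)
  qed
  have ES4: "(err 3 + cc) * E \<le> err 4" proof -
    have eq: "err (3+1) = err 4" by (simp add: eval_nat_numeral)
    show ?thesis using ES[of 3] by (simp only: eq)
  qed
  have ES5: "(err 4 + cc) * E \<le> err 5" proof -
    have eq: "err (4+1) = err 5" by (simp add: eval_nat_numeral)
    show ?thesis using ES[of 4] by (simp only: eq)
  qed
  have el: "err k < aa" if "k \<le> 5" for k
    using errle5[OF that E1 cc0] Delta by (simp add: err_def)
  have e00: "err 0 = 0" by (simp add: err_def)
  note vals = at3 rq rE arho arctan_minus e00
  have pm1: "sin (2*pi*(y - 2/3)) = sin (2*pi*(y - (-1/3)))" for y :: real
  proof -
    have "2*pi*(y - (-1/3)) = 2*pi*(y - 2/3) + 2 * pi" by (simp add: algebra_simps)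
    thus ?thesis by simp
  qed
  have pm2: "sin (2*pi*(y - (-2/3))) = sin (2*pi*(y - 1/3))" for y :: real
  proof -
    have "2*pi*(y - (-2/3)) = 2*pi*(y - 1/3) + 2 * pi" by (simp add: algebra_simps)
    thus ?thesis by simp
  qed
  have main: "0 - \<epsilon> \<le> g3 T \<and> g3 T < g2 T \<and> g2 T \<le> 0 + \<epsilon> \<and>
      1/3 - \<epsilon> \<le> g1 (3*T) \<and> g1 (3*T) < g3 (3*T) + 1 \<and> g3 (3*T) + 1 \<le> 1/3 + \<epsilon> \<and>
      -1/3 - \<epsilon> \<le> g2 (5*T) - 1 \<and> g2 (5*T) - 1 < g1 (5*T) \<and> g1 (5*T) \<le> -1/3 + \<epsilon>"
    if sols: "is_ctrl_sol c \<sigma> a b h 0 g1" "is_ctrl_sol c \<sigma> a b h (1/3) g2" "is_ctrl_sol c \<sigma> a b h (-1/3) g3"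
    for g1 g2 g3
  proof -
    have s1: "\<bar>g1 0 - 0\<bar> \<le> err 0" using sol_init[OF sols(1)] e00 by simp
    have s2: "\<bar>g2 0 - 1/3\<bar> \<le> err 0" using sol_init[OF sols(2)] e00 by simp
    have s3: "\<bar>g3 0 - (-1/3)\<bar> \<le> err 0" using sol_init[OF sols(3)] e00 by simp
    have a1: "\<bar>g1 T - 0\<bar> \<le> err 1"
      by (rule order_trans[OF ph1[of 0 g1 0 0 0 0 "err 0"] ES1]) (use sols s1 in \<open>simp_all add: vals\<close>)
    have a2: "\<bar>g1 (2*T) - 0\<bar> \<le> err 2"
      by (rule order_trans[OF ph2[of 0 g1 0 0 0 0 "err 1"] ES2]) (use sols a1 in \<open>simp_all add: vals\<close>)
    have a3: "\<bar>g1 (3*T) - (1/3 - aa)\<bar> \<le> err 3"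
      by (rule order_trans[OF ph3[of 0 g1 "1/3" "- sqrt 3" 0 "1/3 - aa" "err 2"] ES3]) (use sols a2 in \<open>simp_all add: vals\<close>)
    have a4: "\<bar>g1 (4*T) - 0\<bar> \<le> err 4"
      by (rule order_trans[OF ph4[of 0 g1 "1/3" "- \<rho>" "1/3 - aa" 0 "err 3"] ES4]) (use sols a3 in \<open>simp_all add: vals\<close>)
    have a5: "\<bar>g1 (5*T) - (-1/3 + aa)\<bar> \<le> err 5"
      by (rule order_trans[OF ph5[of 0 g1 "-1/3" "sqrt 3" 0 "-1/3 + aa" "err 4"] ES5]) (use sols a4 in \<open>simp_all add: vals\<close>)
    have b1: "\<bar>g2 T - aa\<bar> \<le> err 1"
      by (rule order_trans[OF ph1[of "1/3" g2 0 "sqrt 3" "1/3" aa "err 0"] ES1]) (use sols s2 in \<open>simp_all add: vals\<close>)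
    have b2: "\<bar>g2 (2*T) - 1/3\<bar> \<le> err 2"
      by (rule order_trans[OF ph2[of "1/3" g2 0 \<rho> aa "1/3" "err 1"] ES2]) (use sols b1 in \<open>simp_all add: vals\<close>)
    have b3: "\<bar>g2 (3*T) - 1/3\<bar> \<le> err 3"
      by (rule order_trans[OF ph3[of "1/3" g2 "1/3" 0 "1/3" "1/3" "err 2"] ES3]) (use sols b2 in \<open>simp_all add: vals\<close>)
    have b4: "\<bar>g2 (4*T) - 1/3\<bar> \<le> err 4"
      by (rule order_trans[OF ph4[of "1/3" g2 "1/3" 0 "1/3" "1/3" "err 3"] ES4]) (use sols b3 in \<open>simp_all add: vals\<close>)
    have b5: "\<bar>g2 (5*T) - (2/3 - aa)\<bar> \<le> err 5"
      by (rule order_trans[OF ph5[of "1/3" g2 "2/3" "- sqrt 3" "1/3" "2/3 - aa" "err 4"] ES5]) (use sols b4 pm1 in \<open>simp_all add: vals\<close>)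
    have c1: "\<bar>g3 T - (-aa)\<bar> \<le> err 1"
      by (rule order_trans[OF ph1[of "-1/3" g3 0 "- sqrt 3" "-1/3" "-aa" "err 0"] ES1]) (use sols s3 in \<open>simp_all add: vals\<close>)
    have c2: "\<bar>g3 (2*T) - (-1/3)\<bar> \<le> err 2"
      by (rule order_trans[OF ph2[of "-1/3" g3 0 "- \<rho>" "-aa" "-1/3" "err 1"] ES2]) (use sols c1 in \<open>simp_all add: vals\<close>)
    have c3: "\<bar>g3 (3*T) - (-2/3 + aa)\<bar> \<le> err 3"
      by (rule order_trans[OF ph3[of "-1/3" g3 "-2/3" "sqrt 3" "-1/3" "-2/3 + aa" "err 2"] ES3]) (use sols c2 pm2 in \<open>simp_all add: vals\<close>)
    have c4: "\<bar>g3 (4*T) - (-1/3)\<bar> \<le> err 4"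
      by (rule order_trans[OF ph4[of "-1/3" g3 "-2/3" \<rho> "-2/3 + aa" "-1/3" "err 3"] ES4]) (use sols c3 pm2 in \<open>simp_all add: vals\<close>)
    have e1: "err 1 < aa" "err 3 < aa" "err 5 < aa" using el by auto
    show ?thesis using a3 a5 b1 b5 c1 c3 e1 aaeps by (simp add: abs_le_iff; linarith)
  qed
  show ?thesis using T0 inH main by blast
qed


end
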